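(* Let $k$ be a positive integer and let $\theta$ be a nonnegative real number. Then there exists an infinite word $\mathbf{w}$ such that $\mathcal{A}_k(\mathbf{w})=\theta$, where $\mathcal{A}_k$ denotes the $k$-abelian critical exponent. Moreover, $\mathbf{w}$ can be taken over an alphabet of at most three letters.
   Context: For finite words $u,x$, $|u|_x$ denotes the number of occurrences of $x$ as a factor of $u$. Two finite words $u,v$ are $k$-abelian equivalent, written $u\sim_k v$, if $|u|_x=|v|_x$ for every nonempty word $x$ of length at most $k$. A $k$-abelian power of exponent $e$ (a positive integer) and period $m$ is a nonempty word $u_0u_1\cdots u_{e-1}$ with $|u_0|=m$ and $u_0\sim_k u_1\sim_k\cdots\sim_k u_{e-1}$. For an infinite word $\mathbf{w}$ and positive integer $m$, let $A_{k,\mathbf{w}}(m)$ be the supremum of the exponents of $k$-abelian powers of period $m$ occurring in $\mathbf{w}$. The $k$-abelian critical exponent is $\mathcal{A}_k(\mathbf{w})=\limsup_{m\to\infty} A_{k,\mathbf{w}}(m)/m$. *)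

theory Defs
  imports "HOL-Analysis.Analysis"
begin

definition occ :: "'a list \<Rightarrow> 'a list \<Rightarrow> nat" where
  "occ u x = card {i. i + length x \<le> length u \<and> take (length x) (drop i u) = x}"

definition kab_equiv :: "nat \<Rightarrow> 'a list \<Rightarrow> 'a list \<Rightarrow> bool" where
  "kab_equiv k u v \<longleftrightarrow> (\<forall>x. x \<noteq> [] \<and> length x \<le> k \<longrightarrow> occ u x = occ v x)"

definition factor :: "(nat \<Rightarrow> 'a) \<Rightarrow> nat \<Rightarrow> nat \<Rightarrow> 'a list" where
  "factor w p n = map w [p..<p+n]"

definition kab_power_at :: "nat \<Rightarrow> (nat \<Rightarrow> 'a) \<Rightarrow> nat \<Rightarrow> nat \<Rightarrow> nat \<Rightarrow> bool" where
  "kab_power_at k w p m e \<longleftrightarrow> 0 < m \<and> 0 < e \<and>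
     (\<forall>i. i + 1 < e \<longrightarrow> kab_equiv k (factor w (p + i*m) m) (factor w (p + (i+1)*m) m))"

definition kab_A :: "nat \<Rightarrow> (nat \<Rightarrow> 'a) \<Rightarrow> nat \<Rightarrow> ereal" where
  "kab_A k w m = Sup {ereal (real e) | e. \<exists>p. kab_power_at k w p m e}"

definition kab_crit_exp :: "nat \<Rightarrow> (nat \<Rightarrow> 'a) \<Rightarrow> ereal" where
  "kab_crit_exp k w = limsup (\<lambda>m. kab_A k w m / ereal (real m))"

end

theory Submission
  imports Defs "HOL-Computational_Algebra.Primes" "HOL-Real_Asymp.Real_Asymp"
begin

definition dmod :: "nat \<Rightarrow> nat \<Rightarrow> nat" where
  "dmod d L = min (d mod L) (L - d mod L)"

lemma dmod_le_dist:
  assumes "0 < L"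
  shows "int (dmod d L) \<le> \<bar>int d - c * int L\<bar>"
proof -
  have dm: "int d = int L * int (d div L) + int (d mod L)"
    by (simp flip: of_nat_mult of_nat_add)
  have lt: "d mod L < L" using assms by simp
  show ?thesis
  proof (cases "c \<le> int (d div L)")
    case True
    then have "int L * c \<le> int L * int (d div L)" by (simp add: mult_left_mono)
    then have "int (d mod L) \<le> \<bar>int d - c * int L\<bar>" using dm by (simp add: algebra_simps)
    then show ?thesis unfolding dmod_def by linarith
  next
    case False
    then have "c \<ge> int (d div L) + 1" by simp
    then have "int L * c \<ge> int L * (int (d div L) + 1)" by (simp add: mult_left_mono)
    then have "int L - int (d mod L) \<le> \<bar>int d - c * int L\<bar>" using dm by (simp add: algebra_simps)
    then show ?thesis unfolding dmod_def using lt by (simp add: of_nat_diff)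
  qed
qed

lemma dmod_mod: "dmod (d mod L) L = dmod d L"
  unfolding dmod_def by simp

lemma dmod_mult_mod: "dmod (m * a) L = dmod ((m mod L) * a) L"
  by (metis dmod_mod mod_mult_left_eq)

lemma ap_lemma:
  assumes L: "0 < L" and h: "(x + J * d) div L = x div L + J * c"
  shows "J * dmod d L < L"
proof -
  have e1: "int x = int L * int (x div L) + int (x mod L)"
    by (simp flip: of_nat_mult of_nat_add)
  have e2: "int x + int J * int d = int L * (int (x div L) + int J * int c) + int ((x + J*d) mod L)"
  proof -
    have "x + J*d = L * (x div L + J * c) + (x + J*d) mod L" by (metis h mult_div_mod_eq)
    then show ?thesis by (metis of_nat_add of_nat_mult)
  qed
  have r1: "x mod L < L" "(x + J*d) mod L < L" using L by auto
  have eq: "int J * (int d - int c * int L) = int ((x + J*d) mod L) - int (x mod L)"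
    using e1 e2 by (simp add: algebra_simps)
  have "\<bar>int ((x + J*d) mod L) - int (x mod L)\<bar> < int L" using r1 by arith
  then have "\<bar>int J * (int d - int c * int L)\<bar> < int L" using eq by simp
  then have "int J * \<bar>int d - int c * int L\<bar> < int L" by (simp add: abs_mult)
  moreover have "int J * int (dmod d L) \<le> int J * \<bar>int d - int c * int L\<bar>"
    using dmod_le_dist[OF L, of d "int c"] by (simp add: mult_left_mono)
  ultimately show ?thesis by (metis of_nat_less_iff of_nat_mult order.strict_trans1)
qed

definition Vw :: "nat \<Rightarrow> nat \<Rightarrow> nat \<Rightarrow> nat \<Rightarrow> nat" where
  "Vw L p1 p2 n = (if even n
     then (if ((n div 2 + 1) * p1) div L = (n div 2 * p1) div L then 0 else 1)
     else (if ((n div 2 + 1) * p2) div L = (n div 2 * p2) div L then 0 else 2))"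

definition G1 :: "nat \<Rightarrow> nat \<Rightarrow> nat \<Rightarrow> nat" where
  "G1 L p n = ((n + 1) div 2 * p) div L"

definition G2 :: "nat \<Rightarrow> nat \<Rightarrow> nat \<Rightarrow> nat" where
  "G2 L p n = (n div 2 * p) div L"

lemma card_less_Suc:
  "card {i. i < Suc n \<and> P i} = card {i. i < n \<and> P i} + (if P n then 1 else 0)"
proof -
  have "{i. i < Suc n \<and> P i} = {i. i < n \<and> P i} \<union> (if P n then {n} else {})"
    by (auto simp: less_Suc_eq)
  then show ?thesis by auto
qed

lemma jump_le:
  fixes p L i :: nat
  assumes "p \<le> L" "0 < L"
  shows "((i + 1) * p) div L \<le> (i * p) div L + 1" "(i * p) div L \<le> ((i + 1) * p) div L"
proof -
  have "((i + 1) * p) div L \<le> (i * p + L) div L"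
    by (rule div_le_mono) (use assms in simp)
  also have "\<dots> = (i * p) div L + 1" using assms by simp
  finally show "((i + 1) * p) div L \<le> (i * p) div L + 1" .
  show "(i * p) div L \<le> ((i + 1) * p) div L" by (rule div_le_mono) simp
qed

lemma lc1:
  assumes "p1 \<le> L" "0 < L"
  shows "card {i. i < n \<and> Vw L p1 p2 i = 1} = G1 L p1 n"
proof (induction n)
  case 0
  then show ?case by (simp add: G1_def)
next
  case (Suc n)
  show ?case
  proof (cases "even n")
    case True
    have a: "(Suc n + 1) div 2 = n div 2 + 1" "(n + 1) div 2 = n div 2" using True by auto
    have j: "((n div 2 + 1) * p1) div L \<le> (n div 2 * p1) div L + 1"
            "(n div 2 * p1) div L \<le> ((n div 2 + 1) * p1) div L"
      using jump_le[OF assms] by auto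
    show ?thesis unfolding card_less_Suc Suc G1_def a using True j
      by (auto simp: Vw_def)
  next
    case False
    have a: "(Suc n + 1) div 2 = (n + 1) div 2" using False by presburger
    show ?thesis unfolding card_less_Suc Suc G1_def a using False
      by (auto simp: Vw_def)
  qed
qed

lemma lc2:
  assumes "p2 \<le> L" "0 < L"
  shows "card {i. i < n \<and> Vw L p1 p2 i = 2} = G2 L p2 n"
proof (induction n)
  case 0
  then show ?case by (simp add: G2_def)
next
  case (Suc n)
  show ?case
  proof (cases "even n")
    case False
    have a: "Suc n div 2 = n div 2 + 1" using False by presburger
    have j: "((n div 2 + 1) * p2) div L \<le> (n div 2 * p2) div L + 1"
            "(n div 2 * p2) div L \<le> ((n div 2 + 1) * p2) div L"
      using jump_le[OF assms] by auto
    show ?thesis unfolding card_less_Suc Suc G2_def a using False j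
      by (auto simp: Vw_def)
  next
    case True
    have a: "Suc n div 2 = n div 2" using True by presburger
    show ?thesis unfolding card_less_Suc Suc G2_def a using True
      by (auto simp: Vw_def)
  qed
qed

lemma Vw_range: "Vw L p1 p2 n \<in> {0, 1, 2}"
  by (simp add: Vw_def)

lemma Vw_period: assumes "0 < L" shows "Vw L p1 p2 (n + 2 * L) = Vw L p1 p2 n"
proof -
  have e: "even (n + 2 * L) = even n" by simp
  have d: "(n + 2 * L) div 2 = n div 2 + L" by simp
  have k: "\<And>a p. ((a + L) * p) div L = (a * p) div L + p"
  proof -
    fix a p :: nat
    have "(a + L) * p = a * p + p * L" by (simp add: algebra_simps)
    then show "((a + L) * p) div L = (a * p) div L + p" using assms by simp
  qed
  have k2: "\<And>p. ((n div 2 + L + 1) * p) div L = ((n div 2 + 1) * p) div L + p"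
    using k[of "n div 2 + 1"] by (simp add: algebra_simps)
  show ?thesis unfolding Vw_def e d k k2 by simp
qed

lemma G1_shift: assumes "0 < L" shows "G1 L p (q + 2 * L) = G1 L p q + p"
proof -
  have d: "(q + 2 * L + 1) div 2 = (q + 1) div 2 + L" by simp
  have "((q + 1) div 2 + L) * p = (q + 1) div 2 * p + p * L" by (simp add: algebra_simps)
  then show ?thesis unfolding G1_def d using assms by simp
qed

lemma G1_mono: "x \<le> y \<Longrightarrow> G1 L p x \<le> G1 L p y"
  unfolding G1_def by (intro div_le_mono mult_le_mono1) simp
lemma G2_mono: "x \<le> y \<Longrightarrow> G2 L p x \<le> G2 L p y"
  unfolding G2_def by (intro div_le_mono mult_le_mono1) simp

definition qf :: "nat \<Rightarrow> real" where
  "qf t = sqrt (real t * sqrt (real t))"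

lemma qf_nonneg: "0 \<le> qf t" by (simp add: qf_def)

lemma qf_mono: "t \<le> m \<Longrightarrow> qf t \<le> qf m"
  unfolding qf_def by (intro real_sqrt_le_mono mult_mono) auto

definition goodt :: "nat \<Rightarrow> nat \<Rightarrow> nat \<Rightarrow> bool" where
  "goodt L p1 p2 \<longleftrightarrow> (\<forall>t. 0 < t \<and> t < L \<longrightarrow>
      real L \<le> 40 * real (dmod (t * p1) L) * qf t \<or> real L \<le> 40 * real (dmod (t * p2) L) * qf t)"

lemma ap_iter:
  fixes g :: "nat \<Rightarrow> nat"
  assumes "\<forall>i<F. g (q + (i + 1) * m) = g (q + i * m) + c"
  shows "i \<le> F \<Longrightarrow> g (q + i * m) = g q + i * c"
proof (induction i)
  case 0 then show ?case by simp
next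
  case (Suc i)
  then have "g (q + (i + 1) * m) = g (q + i * m) + c" using assms by auto
  then show ?case using Suc by simp
qed

lemma J_bound:
  assumes L: "0 < L" and good: "goodt L p1 p2" and m: "0 < m" "m < 2 * L" "m \<noteq> L"
    and h1: "J * dmod (m * p1) L < L" and h2: "J * dmod (m * p2) L < L"
  shows "real J < 40 * qf m"
proof -
  define t where "t = m mod L"
  have t0: "0 < t"
  proof (rule ccontr)
    assume "\<not> 0 < t"
    then have "L dvd m" unfolding t_def by auto
    then obtain k where "m = L * k" by auto
    moreover from m this have "k \<noteq> 0" "k \<noteq> 1" by auto
    then have "2 \<le> k" by linarith
    then have "L * 2 \<le> L * k" by simp
    ultimately show False using m by linarith
  qed
  have tL: "t < L" unfolding t_def using L by simp
  have tm: "t \<le> m" unfolding t_def by simp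
  have d1: "dmod (m * p1) L = dmod (t * p1) L" and d2: "dmod (m * p2) L = dmod (t * p2) L"
    unfolding t_def by (rule dmod_mult_mod)+
  have q: "qf t \<le> qf m" by (rule qf_mono[OF tm])
  from good t0 tL have
    "real L \<le> 40 * real (dmod (t * p1) L) * qf t \<or> real L \<le> 40 * real (dmod (t * p2) L) * qf t"
    unfolding goodt_def by blast
  then obtain D where D: "real L \<le> 40 * real D * qf t" "J * D < L"
    using h1 h2 d1 d2 by auto
  have Dpos: "0 < D" using D L by (cases "D = 0") auto
  have "real J * real D < 40 * real D * qf t" using D(1) D(2)
    by (metis of_nat_less_iff of_nat_mult order_less_le_trans)
  then have "real J < 40 * qf t" using Dpos by (simp add: mult.commute mult.left_commute)
  then show ?thesis using q by linarith
qed

lemma zone_bound: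
  assumes L: "0 < L" and p1L: "p1 < L" and p2L: "p2 < L" and odd: "odd p1"
    and good: "goodt L p1 p2" and E: "real E \<le> 2 * \<theta> * real L + 1" and th: "0 \<le> \<theta>"
    and m: "0 < m" and len: "q + F * m \<le> 2 * L * E"
    and eq1: "\<forall>i<F. G1 L p1 (q + (i + 1) * m) = G1 L p1 (q + i * m) + c1"
    and eq2: "\<forall>i<F. G2 L p2 (q + (i + 1) * m) = G2 L p2 (q + i * m) + c2"
  shows "real F \<le> \<theta> * real m + 80 * qf m + 2"
proof -
  have it1: "\<And>i. i \<le> F \<Longrightarrow> G1 L p1 (q + i * m) = G1 L p1 q + i * c1"
    using ap_iter[OF eq1] by blast
  have it2: "\<And>i. i \<le> F \<Longrightarrow> G2 L p2 (q + i * m) = G2 L p2 q + i * c2"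
    using ap_iter[OF eq2] by blast
  have qn: "0 \<le> qf m" by (rule qf_nonneg)
  have tm: "0 \<le> \<theta> * real m" using th by simp
  show ?thesis
  proof (cases "F \<le> 1")
    case True
    then show ?thesis using qn tm by simp
  next
    case F2: False
    show ?thesis
    proof (cases "2 * L \<le> m")
      case True
      have "real F * real m \<le> 2 * real L * real E"
        using len by (metis of_nat_add of_nat_le_iff of_nat_mult le_add2 order_trans of_nat_numeral)
      also have "\<dots> \<le> 2 * real L * (2 * \<theta> * real L + 1)"
        using E L by (intro mult_left_mono) auto
      also have "\<dots> = \<theta> * (2 * real L) * (2 * real L) + 2 * real L" by (simp add: algebra_simps)
      also have "\<dots> \<le> \<theta> * real m * real m + real m"
      proof -
        have a: "2 * real L \<le> real m" using True by simp
        have "\<theta> * (2 * real L) * (2 * real L) \<le> \<theta> * real m * real m"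
          using a th L by (intro mult_mono) (auto intro: mult_left_mono)
        then show ?thesis using a by linarith
      qed
      finally have "real F * real m \<le> (\<theta> * real m + 1) * real m" by (simp add: algebra_simps)
      then have "real F \<le> \<theta> * real m + 1" using m by simp
      then show ?thesis using qn by linarith
    next
      case m2: False
      show ?thesis
      proof (cases "m = L")
        case True
        have "G1 L p1 (q + 2 * m) = G1 L p1 q + 2 * c1" using it1[of 2] F2 by simp
        moreover have "G1 L p1 (q + 2 * m) = G1 L p1 q + p1" using G1_shift[OF L] True by simp
        ultimately have "p1 = 2 * c1" by simp
        with odd show ?thesis by simp
      next
        case mL: False
        define J where "J = F div 2"
        have J2: "2 * J \<le> F" unfolding J_def by simp
        have FJ: "F \<le> 2 * J + 1" unfolding J_def by simp
        have a1: "G1 L p1 (q + (2 * J) * m) = G1 L p1 q + (2 * J) * c1" using it1[OF J2] .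
        have a2: "G2 L p2 (q + (2 * J) * m) = G2 L p2 q + (2 * J) * c2" using it2[OF J2] .
        have s1: "(q + 2 * J * m + 1) div 2 = (q + 1) div 2 + J * m" by simp
        have s2: "(q + 2 * J * m) div 2 = q div 2 + J * m" by simp
        have b1: "((q + 1) div 2 * p1 + J * (m * p1)) div L = ((q + 1) div 2 * p1) div L + J * (2 * c1)"
          using a1 unfolding G1_def s1 by (simp add: algebra_simps)
        have b2: "(q div 2 * p2 + J * (m * p2)) div L = (q div 2 * p2) div L + J * (2 * c2)"
          using a2 unfolding G2_def s2 by (simp add: algebra_simps)
        have h1: "J * dmod (m * p1) L < L" by (rule ap_lemma[OF L b1])
        have h2: "J * dmod (m * p2) L < L" by (rule ap_lemma[OF L b2])
        have "real J < 40 * qf m"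
          by (rule J_bound[OF L good m _ mL h1 h2]) (use m2 in simp)
        then have "real F < 80 * qf m + 1" using FJ by linarith
        then show ?thesis using tm by linarith
      qed
    qed
  qed
qed

lemma sq_step:
  fixes a b :: real
  assumes a: "0 < a" and b: "0 < b" and e: "b^2 = a^2 + 1"
  shows "1 / (b * b * b) \<le> 2 / a - 2 / b"
proof -
  have "a^2 < b^2" using e by simp
  then have ba: "a < b" using a b by (simp add: power_less_imp_less_base)
  have h: "(b - a) * (b + a) = 1" using e by (simp add: algebra_simps power2_eq_square)
  have "a * (a + b) \<le> b * (b + b)" using ba a b by (intro mult_mono) auto
  then have "a * (a + b) * (b - a) \<le> b * (b + b) * (b - a)" using ba by (intro mult_right_mono) auto
  moreover have "a * (a + b) * (b - a) = a * ((b - a) * (b + a))" by (simp add: algebra_simps)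
  ultimately have "a * ((b - a) * (b + a)) \<le> b * (b + b) * (b - a)" by simp
  then have k: "a \<le> 2 * b * b * (b - a)" unfolding h by (simp add: algebra_simps)
  have "2 / a - 2 / b = 2 * (b - a) / (a * b)" using a b by (simp add: field_simps)
  moreover have "1 / (b * b * b) \<le> 2 * (b - a) / (a * b)"
    using k a b by (simp add: field_simps)
  ultimately show ?thesis by simp
qed

lemma qf_sq: "(qf t)^2 = real t * sqrt (real t)"
  unfolding qf_def by simp

lemma sum_inv:
  assumes "1 \<le> n"
  shows "(\<Sum>t\<in>{1..n}. 1 / (real t * sqrt (real t))) \<le> 3 - 2 / sqrt (real n)"
  using assms
proof (induction n rule: nat_induct_at_least)
  case base
  then show ?case by simp
next
  case (Suc n)
  have st: "1 / (sqrt (real (Suc n)) * sqrt (real (Suc n)) * sqrt (real (Suc n)))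
      \<le> 2 / sqrt (real n) - 2 / sqrt (real (Suc n))"
    by (rule sq_step) (use Suc in auto)
  have "sqrt (real (Suc n)) * sqrt (real (Suc n)) * sqrt (real (Suc n)) = real (Suc n) * sqrt (real (Suc n))"
    by simp
  then have st2: "1 / (real (Suc n) * sqrt (real (Suc n))) \<le> 2 / sqrt (real n) - 2 / sqrt (real (Suc n))"
    using st by simp
  have "(\<Sum>t\<in>{1..Suc n}. 1 / (real t * sqrt (real t)))
     = (\<Sum>t\<in>{1..n}. 1 / (real t * sqrt (real t))) + 1 / (real (Suc n) * sqrt (real (Suc n)))"
    using Suc by (simp add: sum.atLeast_Suc_atMost_Suc_shift)
  then show ?case using Suc st2 by linarith
qed

lemma sum_inv3: "(\<Sum>t\<in>{1..<L}. 1 / (real t * sqrt (real t))) \<le> 3"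
proof (cases "L \<le> 1")
  case True
  then show ?thesis by simp
next
  case False
  then have e: "{1..<L} = {1..L-1}" by auto
  have "(\<Sum>t\<in>{1..L-1}. 1 / (real t * sqrt (real t))) \<le> 3 - 2 / sqrt (real (L - 1))"
    using False by (intro sum_inv) auto
  also have "\<dots> \<le> 3" by simp
  finally show ?thesis unfolding e .
qed

lemma card_real_less: fixes X :: real shows "card {r::nat. real r < X} \<le> max 0 X + 1"
proof -
  have "{r::nat. real r < X} \<subseteq> {..< nat \<lceil>X\<rceil>}"
  proof
    fix x assume "x \<in> {r::nat. real r < X}"
    then have "int x < \<lceil>X\<rceil>" by (simp add: less_ceiling_iff)
    then show "x \<in> {..< nat \<lceil>X\<rceil>}" by (simp add: zless_nat_eq_int_zless)
  qed
  then have "card {r::nat. real r < X} \<le> nat \<lceil>X\<rceil>"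
    by (metis card_lessThan card_mono finite_lessThan)
  also have "real (nat \<lceil>X\<rceil>) \<le> max 0 X + 1" by linarith
  finally show ?thesis by simp
qed

lemma card_dm:
  fixes X :: real
  assumes L: "0 < L"
  shows "real (card {r. r < L \<and> real (dmod r L) < X}) \<le> 2 * max 0 X + 2"
proof -
  have "{r. r < L \<and> real (dmod r L) < X} \<subseteq> {r::nat. real r < X} \<union> (\<lambda>s. L - s) ` {s::nat. real s < X}"
  proof
    fix r assume "r \<in> {r. r < L \<and> real (dmod r L) < X}"
    then have r: "r < L" "real (min r (L - r)) < X" by (auto simp: dmod_def)
    show "r \<in> {r::nat. real r < X} \<union> (\<lambda>s. L - s) ` {s::nat. real s < X}"
    proof (cases "r \<le> L - r")
      case True
      then show ?thesis using r by (simp add: min_def)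
    next
      case False
      then have "real (L - r) < X" using r by (simp add: min_def)
      moreover have "r = L - (L - r)" using r by simp
      ultimately show ?thesis by blast
    qed
  qed
  moreover have "finite {r::nat. real r < X}"
    by (rule finite_subset[of _ "{..< nat \<lceil>X\<rceil>}"]) (auto simp: less_ceiling_iff zless_nat_eq_int_zless)
  ultimately have "card {r. r < L \<and> real (dmod r L) < X} \<le> card {r::nat. real r < X} + card ((\<lambda>s. L - s) ` {s::nat. real s < X})"
    by (meson card_Un_le card_mono finite_Un finite_imageI order_trans)
  also have "\<dots> \<le> card {r::nat. real r < X} + card {r::nat. real r < X}"
    using card_image_le \<open>finite {r::nat. real r < X}\<close> by auto
  finally have "real (card {r. r < L \<and> real (dmod r L) < X}) \<le> 2 * real (card {r::nat. real r < X})"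
    by simp
  then show ?thesis using card_real_less[of X] by linarith
qed

lemma mulmod_inj:
  assumes p: "prime (L::nat)" and t: "0 < t" "t < L"
  shows "inj_on (\<lambda>p. (t * p) mod L) {..<L}"
proof
  fix x y assume x: "x \<in> {..<L}" and y: "y \<in> {..<L}" and e: "(t * x) mod L = (t * y) mod L"
  have nd: "\<not> L dvd t" using t by (auto dest: dvd_imp_le)
  have k: "\<And>x y. x \<in> {..<L} \<Longrightarrow> y \<in> {..<L} \<Longrightarrow> y \<le> x \<Longrightarrow> (t * x) mod L = (t * y) mod L \<Longrightarrow> x = y"
  proof -
    fix x y assume x: "x \<in> {..<L}" and y: "y \<in> {..<L}" and le: "y \<le> x" and e: "(t * x) mod L = (t * y) mod L"
    have "L dvd t * x - t * y" using e le by (simp add: mod_eq_dvd_iff_nat)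
    then have "L dvd t * (x - y)" by (simp add: diff_mult_distrib2)
    then have "L dvd (x - y)" using p nd by (simp add: prime_dvd_mult_iff)
    moreover have "x - y < L" using x by auto
    ultimately have "x - y = 0" by (metis dvd_imp_le neq0_conv not_le)
    then show "x = y" using le by simp
  qed
  show "x = y"
  proof (cases "y \<le> x")
    case True then show ?thesis using k x y e by blast
  next
    case False then show ?thesis using k[of y x] x y e by simp
  qed
qed

lemma card_A:
  assumes p: "prime (L::nat)" and t: "0 < t" "t < L"
  shows "card {p. p < L \<and> Q ((t * p) mod L)} = card {r. r < L \<and> Q r}"
proof -
  let ?f = "\<lambda>p. (t * p) mod L"
  have inj: "inj_on ?f {..<L}" by (rule mulmod_inj[OF p t])
  have L0: "0 < L" using p prime_gt_0_nat by blast
  have sub: "?f ` {..<L} \<subseteq> {..<L}" using L0 by auto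
  have "card (?f ` {..<L}) = card {..<L::nat}" using inj by (simp add: card_image)
  then have surj: "?f ` {..<L} = {..<L}" using sub by (simp add: card_subset_eq)
  have "?f ` {p. p < L \<and> Q (?f p)} = {r. r < L \<and> Q r}"
  proof
    show "?f ` {p. p < L \<and> Q (?f p)} \<subseteq> {r. r < L \<and> Q r}" using L0 by auto
    show "{r. r < L \<and> Q r} \<subseteq> ?f ` {p. p < L \<and> Q (?f p)}"
    proof
      fix r assume r: "r \<in> {r. r < L \<and> Q r}"
      then have "r \<in> ?f ` {..<L}" using surj by auto
      then obtain p where "p < L" "r = ?f p" by auto
      then show "r \<in> ?f ` {p. p < L \<and> Q (?f p)}" using r by auto
    qed
  qed
  moreover have "inj_on ?f {p. p < L \<and> Q (?f p)}" by (rule inj_on_subset[OF inj]) auto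
  ultimately have "card {r. r < L \<and> Q r} = card {p. p < L \<and> Q (?f p)}"
    using card_image by fastforce
  then show ?thesis by simp
qed

definition reg :: "nat \<Rightarrow> nat \<Rightarrow> nat \<Rightarrow> bool" where
  "reg r L p = (if r = 0 then L \<le> 8 * p \<and> 4 * p < L else 5 * L \<le> 8 * p \<and> 4 * p < 3 * L)"

lemma odd_region:
  assumes L: "300 \<le> L"
  shows "\<exists>U. U \<subseteq> {p. p < L \<and> odd p \<and> reg r L p} \<and> finite U \<and> real (card U) \<ge> real L / 16 - 3"
proof -
  define a where "a = (if r = 0 then L div 16 + 1 else 5 * L div 16 + 1)"
  define b where "b = (if r = 0 then (L - 4) div 8 else (3 * L - 4) div 8)"
  define U where "U = (\<lambda>u. 2 * u + 1) ` {a..<b}"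
  have f1: "16 * (L div 16) \<le> L" "L < 16 * (L div 16) + 16" by linarith+
  have f2: "16 * (5 * L div 16) \<le> 5 * L" "5 * L < 16 * (5 * L div 16) + 16" by linarith+
  have f3: "8 * ((L - 4) div 8) \<le> L - 4" "L - 4 < 8 * ((L - 4) div 8) + 8" by linarith+
  have f4: "8 * ((3 * L - 4) div 8) \<le> 3 * L - 4" "3 * L - 4 < 8 * ((3 * L - 4) div 8) + 8" by linarith+
  have "U \<subseteq> {p. p < L \<and> odd p \<and> reg r L p}"
  proof
    fix p assume "p \<in> U"
    then obtain u where u: "a \<le> u" "u < b" "p = 2 * u + 1" unfolding U_def by auto
    show "p \<in> {p. p < L \<and> odd p \<and> reg r L p}"
    proof (cases "r = 0")
      case True
      then show ?thesis using u f1 f3 L unfolding a_def b_def reg_def by auto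
    next
      case False
      then show ?thesis using u f2 f4 L unfolding a_def b_def reg_def by auto
    qed
  qed
  moreover have "finite U" unfolding U_def by simp
  moreover have "card U = b - a" unfolding U_def by (subst card_image) (auto simp: inj_on_def)
  moreover have "L \<le> 16 * (b - a) + 48"
  proof (cases "r = 0")
    case True
    then show ?thesis using f1 f3 L unfolding a_def b_def by simp
  next
    case False
    then show ?thesis using f2 f4 L unfolding a_def b_def by simp
  qed
  then have "real (b - a) \<ge> real L / 16 - 3" by linarith
  ultimately show ?thesis by metis
qed

lemma qf_pos: "0 < t \<Longrightarrow> 0 < qf t" by (simp add: qf_def)

lemma exists_good:
  assumes p: "prime L" and L: "300 \<le> L"
  shows "\<exists>p1 p2. p1 < L \<and> p2 < L \<and> odd p1 \<and> reg r L p1 \<and> goodt L p1 p2"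
proof -
  obtain U where U: "U \<subseteq> {p. p < L \<and> odd p \<and> reg r L p}" "finite U" "real (card U) \<ge> real L / 16 - 3"
    using odd_region[OF L] by blast
  define X where "X t = real L / (40 * qf t)" for t
  define A where "A t = {p. p < L \<and> real (dmod ((t * p) mod L) L) < X t}" for t
  define B where "B = U \<times> {..<L}"
  define Bad where "Bad = (\<Union>t\<in>{1..<L}. A t \<times> A t)"
  have L0: "0 < L" using L by simp
  have finA: "finite (A t)" for t unfolding A_def by simp
  have cardA: "real (card (A t)) \<le> 2 * X t + 2" if t: "t \<in> {1..<L}" for t
  proof -
    have "card (A t) = card {r. r < L \<and> real (dmod r L) < X t}"
      unfolding A_def by (rule card_A[OF p]) (use t in auto)
    moreover have "X t \<ge> 0" unfolding X_def by (simp add: qf_nonneg)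
    ultimately show ?thesis using card_dm[OF L0, of "X t"] by simp
  qed
  have cardAA: "real (card (A t \<times> A t)) \<le> real L ^ 2 / (200 * (real t * sqrt (real t))) + 8"
    if t: "t \<in> {1..<L}" for t
  proof -
    have c: "real (card (A t \<times> A t)) = real (card (A t)) ^ 2" by (simp add: card_cartesian_product power2_eq_square)
    have x0: "0 \<le> X t" unfolding X_def by (simp add: qf_nonneg)
    have "real (card (A t)) ^ 2 \<le> (2 * X t + 2) ^ 2"
      using cardA[OF t] by (intro power_mono) auto
    also have "\<dots> = 8 * (X t) ^ 2 + 8 - 4 * (X t - 1)^2"
      by (simp add: power2_eq_square algebra_simps)
    also have "\<dots> \<le> 8 * (X t) ^ 2 + 8" by simp
    also have "8 * (X t) ^ 2 = real L ^ 2 / (200 * (real t * sqrt (real t)))"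
    proof -
      have "(X t)^2 = real L ^ 2 / (1600 * (qf t)^2)" unfolding X_def by (simp add: power_divide power_mult_distrib)
      then show ?thesis unfolding qf_sq by simp
    qed
    finally show ?thesis using c by simp
  qed
  have "real (card Bad) \<le> (\<Sum>t\<in>{1..<L}. real (card (A t \<times> A t)))"
    unfolding Bad_def using card_UN_le[of "{1..<L}" "\<lambda>t. A t \<times> A t"] by (simp flip: of_nat_sum)
  also have "\<dots> \<le> (\<Sum>t\<in>{1..<L}. real L ^ 2 / 200 * (1 / (real t * sqrt (real t))) + 8)"
    by (intro sum_mono) (use cardAA in simp)
  also have "\<dots> = real L ^ 2 / 200 * (\<Sum>t\<in>{1..<L}. 1 / (real t * sqrt (real t))) + 8 * real (L - 1)"
    by (simp add: sum.distrib sum_distrib_left)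
  also have "\<dots> \<le> real L ^ 2 / 200 * 3 + 8 * real L"
    using sum_inv3[of L] by (intro add_mono mult_left_mono) auto
  finally have cb: "real (card Bad) \<le> 3 * real L ^ 2 / 200 + 8 * real L" by simp
  have cB: "real (card B) \<ge> (real L / 16 - 3) * real L"
    unfolding B_def using U(3) by (simp add: card_cartesian_product mult_right_mono)
  have "3 * real L ^ 2 / 200 + 8 * real L < (real L / 16 - 3) * real L"
  proof -
    have "0 < real L * (19 * real L / 400 - 11)" using L by (intro mult_pos_pos) auto
    then show ?thesis by (simp add: power2_eq_square algebra_simps)
  qed
  then have "card Bad < card B" using cb cB by linarith
  moreover have "finite Bad" unfolding Bad_def using finA by auto
  ultimately have "\<not> B \<subseteq> Bad"
  proof (intro notI)
    assume "card Bad < card B" "finite Bad" "B \<subseteq> Bad"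
    then have "card B \<le> card Bad" using card_mono by blast
    then show False using \<open>card Bad < card B\<close> by simp
  qed
  then obtain p1 p2 where pp: "(p1, p2) \<in> B" "(p1, p2) \<notin> Bad" by auto
  have p1: "p1 < L" "odd p1" "reg r L p1" using pp(1) U(1) unfolding B_def by auto
  have p2: "p2 < L" using pp(1) unfolding B_def by auto
  have "goodt L p1 p2" unfolding goodt_def
  proof (intro allI impI)
    fix t assume t: "0 < t \<and> t < L"
    then have "t \<in> {1..<L}" by auto
    then have "p1 \<notin> A t \<or> p2 \<notin> A t" using pp(2) unfolding Bad_def by auto
    then have "\<not> real (dmod (t * p1) L) < X t \<or> \<not> real (dmod (t * p2) L) < X t"
      using p1 p2 unfolding A_def by (auto simp: dmod_mod)
    moreover have "0 < qf t" using t qf_pos by auto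
    ultimately show "real L \<le> 40 * real (dmod (t * p1) L) * qf t \<or> real L \<le> 40 * real (dmod (t * p2) L) * qf t"
      unfolding X_def by (auto simp: field_simps)
  qed
  then show ?thesis using p1 p2 by blast
qed

definition Ef :: "real \<Rightarrow> nat \<Rightarrow> nat" where
  "Ef \<theta> L = max 1 (nat \<lceil>2 * \<theta> * real L\<rceil>)"

definition Zl :: "real \<Rightarrow> nat \<Rightarrow> nat" where
  "Zl \<theta> L = 2 * L * Ef \<theta> L"

definition NP :: "nat \<Rightarrow> nat" where
  "NP n = (SOME p. prime p \<and> n \<le> p)"

lemma NP: "prime (NP n) \<and> n \<le> NP n"
proof -
  obtain p where "prime p" "p > n" using bigger_prime by blast
  then have "\<exists>p. prime p \<and> n \<le> p" by auto
  then show ?thesis unfolding NP_def by (rule someI_ex)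
qed

primrec Lseq :: "real \<Rightarrow> nat \<Rightarrow> nat" where
  "Lseq \<theta> 0 = NP 300"
| "Lseq \<theta> (Suc j) = NP (max (300 + Suc j * Suc j) (Zl \<theta> (Lseq \<theta> j)))"

definition goodp :: "nat \<Rightarrow> nat \<Rightarrow> nat \<times> nat \<Rightarrow> bool" where
  "goodp L r pp \<longleftrightarrow> fst pp < L \<and> snd pp < L \<and> odd (fst pp) \<and> reg r L (fst pp) \<and> goodt L (fst pp) (snd pp)"

definition Pseq :: "real \<Rightarrow> nat \<Rightarrow> nat \<times> nat" where
  "Pseq \<theta> j = (SOME pp. goodp (Lseq \<theta> j) (j mod 2) pp)"

definition Zs :: "real \<Rightarrow> nat \<Rightarrow> nat" where
  "Zs \<theta> j = Zl \<theta> (Lseq \<theta> j)"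

definition Ss :: "real \<Rightarrow> nat \<Rightarrow> nat" where
  "Ss \<theta> j = (\<Sum>i<j. Zs \<theta> i)"

definition zone :: "real \<Rightarrow> nat \<Rightarrow> nat" where
  "zone \<theta> n = (LEAST j. n < Ss \<theta> (Suc j))"

definition wd :: "real \<Rightarrow> nat \<Rightarrow> nat" where
  "wd \<theta> n = (let j = zone \<theta> n in Vw (Lseq \<theta> j) (fst (Pseq \<theta> j)) (snd (Pseq \<theta> j)) (n - Ss \<theta> j))"

lemma Lseq_prime: "prime (Lseq \<theta> j)"
  by (cases j) (simp_all add: NP)

lemma Lseq_ge: "300 + j * j \<le> Lseq \<theta> j"
proof (cases j)
  case 0 then show ?thesis using NP[of 300] by simp
next
  case (Suc i) then show ?thesis using NP[of "max (300 + Suc i * Suc i) (Zl \<theta> (Lseq \<theta> i))"] by simp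
qed

lemma Ef_ge1: "1 \<le> Ef \<theta> L" by (simp add: Ef_def)

lemma Ef_le: assumes "0 \<le> \<theta>" shows "real (Ef \<theta> L) \<le> 2 * \<theta> * real L + 1"
proof -
  have x0: "0 \<le> 2 * \<theta> * real L" using assms by simp
  have c0: "0 \<le> \<lceil>2 * \<theta> * real L\<rceil>" using x0 by simp
  have "real_of_int \<lceil>2 * \<theta> * real L\<rceil> \<le> 2 * \<theta> * real L + 1" by (rule of_int_ceiling_le_add_one)
  then have "real (nat \<lceil>2 * \<theta> * real L\<rceil>) \<le> 2 * \<theta> * real L + 1" using c0 by simp
  then show ?thesis unfolding Ef_def using x0 by (simp add: max_def)
qed

lemma Ef_ge: "2 * \<theta> * real L \<le> real (Ef \<theta> L)"
  unfolding Ef_def by (simp add: max_def) linarith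

lemma Zs_ge: "2 * Lseq \<theta> j \<le> Zs \<theta> j"
  unfolding Zs_def Zl_def using Ef_ge1[of \<theta> "Lseq \<theta> j"] by simp

lemma Zs_sq: "j * j \<le> Zs \<theta> j"
  using Zs_ge[of \<theta> j] Lseq_ge[of j \<theta>] by linarith

lemma Zs_pos: "0 < Zs \<theta> j"
  using Zs_ge[of \<theta> j] Lseq_ge[of j \<theta>] by linarith

lemma Zs_double: "2 * Zs \<theta> j \<le> Zs \<theta> (Suc j)"
proof -
  have "Zl \<theta> (Lseq \<theta> j) \<le> Lseq \<theta> (Suc j)"
    using NP[of "max (300 + Suc j * Suc j) (Zl \<theta> (Lseq \<theta> j))"] by simp
  then show ?thesis using Zs_ge[of \<theta> "Suc j"] unfolding Zs_def by simp
qed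

lemma Ss_Suc: "Ss \<theta> (Suc j) = Ss \<theta> j + Zs \<theta> j"
  unfolding Ss_def by simp

lemma Ss_mono_le: "j < j' \<Longrightarrow> Ss \<theta> j + Zs \<theta> j \<le> Ss \<theta> j'"
proof (induction j' rule: less_induct)
  case (less j')
  then obtain i where i: "j' = Suc i" by (cases j') auto
  show ?case
  proof (cases "j = i")
    case True then show ?thesis using i Ss_Suc by simp
  next
    case False
    then have "j < i" using less.prems i by simp
    then have "Ss \<theta> j + Zs \<theta> j \<le> Ss \<theta> i" using less.IH i by simp
    then show ?thesis using i Ss_Suc[of \<theta> i] by simp
  qed
qed

lemma Ss_strict: "j < j' \<Longrightarrow> Ss \<theta> j < Ss \<theta> j'"
  using Ss_mono_le[of j j' \<theta>] Zs_pos[of \<theta> j] by linarith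

lemma Ss_mono: "j \<le> j' \<Longrightarrow> Ss \<theta> j \<le> Ss \<theta> j'"
  using Ss_strict[of j j' \<theta>] by (cases "j = j'") auto

lemma Ss_ge: "j \<le> Ss \<theta> j"
proof (induction j)
  case 0 then show ?case by simp
next
  case (Suc j) then show ?case using Ss_Suc[of \<theta> j] Zs_pos[of \<theta> j] by simp
qed

lemma zone_prop: "Ss \<theta> (zone \<theta> n) \<le> n \<and> n < Ss \<theta> (Suc (zone \<theta> n))"
proof -
  have ex: "n < Ss \<theta> (Suc n)" using Ss_ge[of "Suc n" \<theta>] by simp
  have a: "n < Ss \<theta> (Suc (zone \<theta> n))" unfolding zone_def by (rule LeastI[of _ n]) (rule ex)
  have b: "Ss \<theta> (zone \<theta> n) \<le> n"
  proof (cases "zone \<theta> n")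
    case 0 then show ?thesis by (simp add: Ss_def)
  next
    case (Suc i)
    then have "i < zone \<theta> n" by simp
    then have "\<not> n < Ss \<theta> (Suc i)" unfolding zone_def by (rule not_less_Least)
    then show ?thesis using Suc by simp
  qed
  from a b show ?thesis by simp
qed

lemma zone_unique:
  assumes "Ss \<theta> j \<le> n" "n < Ss \<theta> (Suc j)"
  shows "zone \<theta> n = j"
proof -
  have z: "Ss \<theta> (zone \<theta> n) \<le> n" "n < Ss \<theta> (Suc (zone \<theta> n))" using zone_prop by auto
  show ?thesis
  proof (rule ccontr)
    assume "zone \<theta> n \<noteq> j"
    then consider "zone \<theta> n < j" | "j < zone \<theta> n" by linarith
    then show False
    proof cases
      case 1
      then have "Suc (zone \<theta> n) \<le> j" by simp
      then have "Ss \<theta> (Suc (zone \<theta> n)) \<le> Ss \<theta> j" by (rule Ss_mono)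
      then show False using z assms by linarith
    next
      case 2
      then have "Suc j \<le> zone \<theta> n" by simp
      then have "Ss \<theta> (Suc j) \<le> Ss \<theta> (zone \<theta> n)" by (rule Ss_mono)
      then show False using z assms by linarith
    qed
  qed
qed

lemma Pseq_good: "goodp (Lseq \<theta> j) (j mod 2) (Pseq \<theta> j)"
proof -
  obtain p1 p2 where "p1 < Lseq \<theta> j \<and> p2 < Lseq \<theta> j \<and> odd p1 \<and> reg (j mod 2) (Lseq \<theta> j) p1 \<and> goodt (Lseq \<theta> j) p1 p2"
    using exists_good[OF Lseq_prime] Lseq_ge[of j \<theta>] by (meson le_add1 order_trans)
  then have "\<exists>pp. goodp (Lseq \<theta> j) (j mod 2) pp" unfolding goodp_def by (intro exI[of _ "(p1, p2)"]) simp
  then show ?thesis unfolding Pseq_def by (rule someI_ex)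
qed

lemma wd_in_zone:
  assumes "Ss \<theta> j \<le> n" "n < Ss \<theta> (Suc j)"
  shows "wd \<theta> n = Vw (Lseq \<theta> j) (fst (Pseq \<theta> j)) (snd (Pseq \<theta> j)) (n - Ss \<theta> j)"
  unfolding wd_def using zone_unique[OF assms] by simp

lemma wd_range: "wd \<theta> n \<in> {0, 1, 2}"
  unfolding wd_def Let_def by (rule Vw_range)

definition cntI :: "(nat \<Rightarrow> nat) \<Rightarrow> nat \<Rightarrow> nat \<Rightarrow> nat \<Rightarrow> nat" where
  "cntI w a x y = card {i. x \<le> i \<and> i < y \<and> w i = a}"

lemma card_interval:
  fixes x y :: nat
  assumes "x \<le> y"
  shows "card {i. x \<le> i \<and> i < y \<and> P i} + card {i. i < x \<and> P i} = card {i. i < y \<and> P i}"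
proof -
  have "{i. i < y \<and> P i} = {i. x \<le> i \<and> i < y \<and> P i} \<union> {i. i < x \<and> P i}" using assms by auto
  moreover have "{i. x \<le> i \<and> i < y \<and> P i} \<inter> {i. i < x \<and> P i} = {}" by auto
  moreover have f1: "finite {i. x \<le> i \<and> i < y \<and> P i}" by (rule finite_subset[of _ "{..<y}"]) auto
  moreover have f2: "finite {i. i < x \<and> P i}" by (rule finite_subset[of _ "{..<x}"]) auto
  ultimately show ?thesis using card_Un_disjoint[OF f1 f2] by simp
qed

lemma card_shift:
  "card {i. x \<le> i \<and> i < y \<and> P i} = card {i. x - S \<le> i \<and> i < y - S \<and> P (i + S)}" if "S \<le> x" for S x y :: nat
proof -
  have "{i. x \<le> i \<and> i < y \<and> P i} = (\<lambda>i. i + S) ` {i. x - S \<le> i \<and> i < y - S \<and> P (i + S)}"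
  proof
    show "{i. x \<le> i \<and> i < y \<and> P i} \<subseteq> (\<lambda>i. i + S) ` {i. x - S \<le> i \<and> i < y - S \<and> P (i + S)}"
    proof
      fix i assume i: "i \<in> {i. x \<le> i \<and> i < y \<and> P i}"
      then have "i = (i - S) + S" using that by simp
      moreover have "i - S \<in> {i. x - S \<le> i \<and> i < y - S \<and> P (i + S)}" using i that by auto
      ultimately show "i \<in> (\<lambda>i. i + S) ` {i. x - S \<le> i \<and> i < y - S \<and> P (i + S)}" by blast
    qed
    show "(\<lambda>i. i + S) ` {i. x - S \<le> i \<and> i < y - S \<and> P (i + S)} \<subseteq> {i. x \<le> i \<and> i < y \<and> P i}"
      using that by auto
  qed
  then show ?thesis by (simp add: card_image inj_on_def)
qed

lemma cnt_zone:
  assumes "Ss \<theta> j \<le> x" "x \<le> y" "y \<le> Ss \<theta> (Suc j)"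
  shows "cntI (wd \<theta>) 1 x y + G1 (Lseq \<theta> j) (fst (Pseq \<theta> j)) (x - Ss \<theta> j) = G1 (Lseq \<theta> j) (fst (Pseq \<theta> j)) (y - Ss \<theta> j)"
    and "cntI (wd \<theta>) 2 x y + G2 (Lseq \<theta> j) (snd (Pseq \<theta> j)) (x - Ss \<theta> j) = G2 (Lseq \<theta> j) (snd (Pseq \<theta> j)) (y - Ss \<theta> j)"
proof -
  let ?S = "Ss \<theta> j" and ?L = "Lseq \<theta> j" and ?p1 = "fst (Pseq \<theta> j)" and ?p2 = "snd (Pseq \<theta> j)"
  have g: "goodp ?L (j mod 2) (Pseq \<theta> j)" by (rule Pseq_good)
  have L0: "0 < ?L" using Lseq_ge[of j \<theta>] by linarith
  have pl: "?p1 \<le> ?L" "?p2 \<le> ?L" using g unfolding goodp_def by auto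
  have w: "\<And>i. x - ?S \<le> i \<Longrightarrow> i < y - ?S \<Longrightarrow> wd \<theta> (i + ?S) = Vw ?L ?p1 ?p2 i"
    using assms by (subst wd_in_zone[of \<theta> j]) auto
  have sh: "\<And>a. cntI (wd \<theta>) a x y = card {i. x - ?S \<le> i \<and> i < y - ?S \<and> Vw ?L ?p1 ?p2 i = a}"
  proof -
    fix a
    have "cntI (wd \<theta>) a x y = card {i. x - ?S \<le> i \<and> i < y - ?S \<and> wd \<theta> (i + ?S) = a}"
      unfolding cntI_def by (rule card_shift) (use assms in simp)
    also have "{i. x - ?S \<le> i \<and> i < y - ?S \<and> wd \<theta> (i + ?S) = a} = {i. x - ?S \<le> i \<and> i < y - ?S \<and> Vw ?L ?p1 ?p2 i = a}"
      using w by auto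
    finally show "cntI (wd \<theta>) a x y = card {i. x - ?S \<le> i \<and> i < y - ?S \<and> Vw ?L ?p1 ?p2 i = a}" .
  qed
  have xy: "x - ?S \<le> y - ?S" using assms by simp
  show "cntI (wd \<theta>) 1 x y + G1 ?L ?p1 (x - ?S) = G1 ?L ?p1 (y - ?S)"
    unfolding sh using card_interval[OF xy, of "\<lambda>i. Vw ?L ?p1 ?p2 i = 1"] lc1[OF pl(1) L0] by simp
  show "cntI (wd \<theta>) 2 x y + G2 ?L ?p2 (x - ?S) = G2 ?L ?p2 (y - ?S)"
    unfolding sh using card_interval[OF xy, of "\<lambda>i. Vw ?L ?p1 ?p2 i = 2"] lc2[OF pl(2) L0] by simp
qed

lemma occ_single: "occ (factor w p m) [a] = cntI w a p (p + m)"
proof -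
  have "{i. i + length [a] \<le> length (factor w p m) \<and> take (length [a]) (drop i (factor w p m)) = [a]}
      = {i. i < m \<and> w (p + i) = a}"
  proof (rule Collect_cong)
    fix i
    show "(i + length [a] \<le> length (factor w p m) \<and> take (length [a]) (drop i (factor w p m)) = [a]) = (i < m \<and> w (p + i) = a)"
    proof (cases "i < m")
      case True
      then have "drop i (factor w p m) = w (p + i) # drop (Suc i) (factor w p m)"
        unfolding factor_def by (simp add: Cons_nth_drop_Suc[symmetric])
      then show ?thesis using True by (simp add: factor_def)
    next
      case False
      then show ?thesis by (simp add: factor_def)
    qed
  qed
  moreover have "card {i. i < m \<and> w (p + i) = a} = cntI w a p (p + m)"
    unfolding cntI_def using card_shift[of p p "p + m" "\<lambda>i. w i = a"] by (simp add: add.commute)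
  ultimately show ?thesis unfolding occ_def by simp
qed

lemma power_counts:
  assumes k: "0 < k" and pw: "kab_power_at k w p m e"
  shows "i < e \<Longrightarrow> cntI w a (p + i * m) (p + i * m + m) = cntI w a p (p + m)"
proof (induction i)
  case 0 then show ?case by simp
next
  case (Suc i)
  then have "i + 1 < e" by simp
  then have "kab_equiv k (factor w (p + i * m) m) (factor w (p + (i + 1) * m) m)"
    using pw unfolding kab_power_at_def by blast
  then have "occ (factor w (p + i * m) m) [a] = occ (factor w (p + (i + 1) * m) m) [a]"
    unfolding kab_equiv_def using k by auto
  then have "cntI w a (p + i * m) (p + i * m + m) = cntI w a (p + Suc i * m) (p + Suc i * m + m)"
    unfolding occ_single by (simp add: algebra_simps)
  then show ?case using Suc by simp
qed

lemma divb:
  fixes L A :: nat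
  assumes "0 < L"
  shows "L * (A div L) \<le> A \<and> A < L * (A div L) + L"
proof -
  have e: "A = L * (A div L) + A mod L" by simp
  have "A mod L < L" using assms by simp
  then show ?thesis using e by linarith
qed

lemma slope:
  assumes L: "0 < L" and pL: "p < L" and g: "G1 L p (x + m) = G1 L p x + c"
  shows "real m * real p - 3 * real L < 2 * real c * real L \<and> 2 * real c * real L < real m * real p + 3 * real L"
proof -
  define h1 where "h1 = (x + 1) div 2"
  define h2 where "h2 = (x + m + 1) div 2"
  define q1 where "q1 = (h1 * p) div L"
  define q2 where "q2 = (h2 * p) div L"
  have g2: "G1 L p (x + m) = q2" unfolding G1_def q2_def h2_def by (rule refl)
  have g1: "G1 L p x = q1" unfolding G1_def q1_def h1_def by (rule refl)
  have qc: "q2 = q1 + c" using g unfolding g1 g2 .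
  have a1: "L * q1 \<le> h1 * p" "h1 * p < L * q1 + L" unfolding q1_def using divb[OF L] by auto
  have a2: "L * q2 \<le> h2 * p" "h2 * p < L * q2 + L" unfolding q2_def using divb[OF L] by auto
  have b: "2 * h2 \<le> x + m + 1" "x + m \<le> 2 * h2" "2 * h1 \<le> x + 1" "x \<le> 2 * h1"
    unfolding h1_def h2_def by linarith+
  have b2: "2 * h2 * p \<le> (x + m + 1) * p" "(x + m) * p \<le> 2 * h2 * p" "2 * h1 * p \<le> (x + 1) * p" "x * p \<le> 2 * h1 * p"
    by (rule mult_right_mono[OF b(1)], simp, rule mult_right_mono[OF b(2)], simp,
        rule mult_right_mono[OF b(3)], simp, rule mult_right_mono[OF b(4)], simp)
  have r1: "real L * real q1 \<le> real h1 * real p" "real h1 * real p < real L * real q1 + real L"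
    using a1 by (metis of_nat_le_iff of_nat_mult, metis of_nat_add of_nat_less_iff of_nat_mult)
  have r2: "real L * real q2 \<le> real h2 * real p" "real h2 * real p < real L * real q2 + real L"
    using a2 by (metis of_nat_le_iff of_nat_mult, metis of_nat_add of_nat_less_iff of_nat_mult)
  have rb: "2 * real h2 * real p \<le> real x * real p + real m * real p + real p"
           "real x * real p + real m * real p \<le> 2 * real h2 * real p"
           "2 * real h1 * real p \<le> real x * real p + real p"
           "real x * real p \<le> 2 * real h1 * real p"
  proof -
    have rb0: "real (2 * h2 * p) \<le> real ((x + m + 1) * p)" "real ((x + m) * p) \<le> real (2 * h2 * p)"
       "real (2 * h1 * p) \<le> real ((x + 1) * p)" "real (x * p) \<le> real (2 * h1 * p)"
      using b2 by (simp_all only: of_nat_le_iff)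
    then show "2 * real h2 * real p \<le> real x * real p + real m * real p + real p"
           "real x * real p + real m * real p \<le> 2 * real h2 * real p"
           "2 * real h1 * real p \<le> real x * real p + real p"
           "real x * real p \<le> 2 * real h1 * real p"
      by (simp_all add: algebra_simps)
  qed
  have rq: "real q2 = real q1 + real c" using qc by simp
  have pl: "real p < real L" using pL by simp
  have e: "real L * real q2 = real L * real q1 + real c * real L" using rq by (simp add: algebra_simps)
  show ?thesis using r1 r2 rb pl e by (simp add: algebra_simps)
qed



lemma clash:
  assumes r0: "reg 0 L p" and r1: "reg 1 L' p'" and L: "0 < L" "0 < L'"
    and s: "2 * real c * real L < real m * real p + 3 * real L"
    and s': "real m * real p' - 3 * real L' < 2 * real c * real L'"
  shows "m < 16"
proof -
  have a: "4 * real p \<le> real L" using r0 unfolding reg_def by simp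
  have b: "5 * real L' \<le> 8 * real p'" using r1 unfolding reg_def by simp
  have "real m * (4 * real p) \<le> real m * real L" using a by (intro mult_left_mono) auto
  then have "(8 * real c) * real L < (real m + 12) * real L" using s by (simp add: algebra_simps)
  then have c1: "8 * real c < real m + 12" using L by (simp add: mult_less_cancel_right)
  have "real m * (5 * real L') \<le> real m * (8 * real p')" using b by (intro mult_left_mono) auto
  then have "(5 * real m - 24) * real L' < (16 * real c) * real L'" using s' by (simp add: algebra_simps)
  then have c2: "5 * real m - 24 < 16 * real c" using L by (simp add: mult_less_cancel_right)
  from c1 c2 have "real m < 16" by linarith
  then show ?thesis by simp
qed

definition ins :: "real \<Rightarrow> nat \<Rightarrow> nat \<Rightarrow> nat \<Rightarrow> nat \<Rightarrow> bool" where
  "ins \<theta> p m i j \<longleftrightarrow> Ss \<theta> j \<le> p + i * m \<and> p + i * m + m \<le> Ss \<theta> (Suc j)"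

lemma ins_m: "ins \<theta> p m i j \<Longrightarrow> m \<le> Zs \<theta> j"
  unfolding ins_def Ss_Suc by linarith

lemma ins_slope:
  assumes i: "ins \<theta> p m i j" and c: "cntI (wd \<theta>) 1 (p + i * m) (p + i * m + m) = c"
  shows "real m * real (fst (Pseq \<theta> j)) - 3 * real (Lseq \<theta> j) < 2 * real c * real (Lseq \<theta> j)
       \<and> 2 * real c * real (Lseq \<theta> j) < real m * real (fst (Pseq \<theta> j)) + 3 * real (Lseq \<theta> j)"
proof -
  let ?S = "Ss \<theta> j"
  have z: "cntI (wd \<theta>) 1 (p + i * m) (p + i * m + m) + G1 (Lseq \<theta> j) (fst (Pseq \<theta> j)) (p + i * m - ?S)
      = G1 (Lseq \<theta> j) (fst (Pseq \<theta> j)) (p + i * m + m - ?S)"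
    by (rule cnt_zone(1)) (use i in \<open>auto simp: ins_def\<close>)
  have e: "p + i * m + m - ?S = (p + i * m - ?S) + m" using i unfolding ins_def by simp
  have g: "G1 (Lseq \<theta> j) (fst (Pseq \<theta> j)) ((p + i * m - ?S) + m) = G1 (Lseq \<theta> j) (fst (Pseq \<theta> j)) (p + i * m - ?S) + c"
    using z c e by simp
  have L0: "0 < Lseq \<theta> j" using Lseq_ge[of j \<theta>] by linarith
  have pl: "fst (Pseq \<theta> j) < Lseq \<theta> j" using Pseq_good[of \<theta> j] unfolding goodp_def by simp
  show ?thesis by (rule slope[OF L0 pl g])
qed

lemma regs: "reg (j mod 2) (Lseq \<theta> j) (fst (Pseq \<theta> j))"
  using Pseq_good[of \<theta> j] unfolding goodp_def by simp

lemma adj_clash: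
  assumes m: "16 \<le> m"
    and i: "ins \<theta> p m i j" "cntI (wd \<theta>) 1 (p + i * m) (p + i * m + m) = c"
    and i': "ins \<theta> p m i' (Suc j)" "cntI (wd \<theta>) 1 (p + i' * m) (p + i' * m + m) = c"
  shows False
proof -
  note s1 = ins_slope[OF i] and s2 = ins_slope[OF i']
  have L0: "0 < Lseq \<theta> j" "0 < Lseq \<theta> (Suc j)" using Lseq_ge[of j \<theta>] Lseq_ge[of "Suc j" \<theta>] by linarith+
  show False
  proof (cases "j mod 2 = 0")
    case True
    then have "Suc j mod 2 = 1" by presburger
    then have "m < 16" using clash[OF _ _ L0] regs[of j \<theta>] regs[of "Suc j" \<theta>] True s1 s2 by auto
    then show False using m by simp
  next
    case False
    then have "j mod 2 = 1" "Suc j mod 2 = 0" by presburger+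
    then have "m < 16" using clash[OF _ _ L0(2) L0(1)] regs[of j \<theta>] regs[of "Suc j" \<theta>] s1 s2 by auto
    then show False using m by simp
  qed
qed

lemma find_ins:
  assumes m: "0 < m" and a: "p < Ss \<theta> j" and b: "Ss \<theta> j \<le> p + e * m" and z: "2 * m \<le> Zs \<theta> j"
  shows "\<exists>i2. ins \<theta> p m i2 j \<and> p + i2 * m + m < Ss \<theta> (Suc j) \<and> i2 \<le> e"
proof -
  define i2 where "i2 = (LEAST i. Ss \<theta> j \<le> p + i * m)"
  have l: "Ss \<theta> j \<le> p + i2 * m" unfolding i2_def by (rule LeastI[of _ e]) (rule b)
  have le: "i2 \<le> e" unfolding i2_def by (rule Least_le) (rule b)
  have "i2 \<noteq> 0" using l a by (cases i2) auto
  then obtain i3 where i3: "i2 = Suc i3" by (cases i2) auto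
  have "\<not> Ss \<theta> j \<le> p + i3 * m" using i3 unfolding i2_def by (metis lessI not_less_Least)
  then have "p + i3 * m < Ss \<theta> j" by simp
  then have "p + i2 * m + m < Ss \<theta> j + 2 * m" using i3 by simp
  also have "\<dots> \<le> Ss \<theta> (Suc j)" using z Ss_Suc[of \<theta> j] by simp
  finally have "p + i2 * m + m < Ss \<theta> (Suc j)" .
  then show ?thesis using l le unfolding ins_def by auto
qed

lemma card_sub1:
  assumes "finite A" "\<And>x y. x \<in> A \<Longrightarrow> y \<in> A \<Longrightarrow> x = y"
  shows "card A \<le> 1"
proof -
  have "card A \<le> Suc 0" using card_le_Suc0_iff_eq[OF assms(1)] assms(2) by blast
  then show ?thesis by simp
qed

lemma lt_mult: "i < e \<Longrightarrow> i * m + m \<le> e * (m::nat)"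
proof -
  assume "i < e"
  then have "Suc i * m \<le> e * m" by (intro mult_le_mono1) simp
  then show ?thesis by simp
qed

lemma upper_bound:
  assumes th: "0 \<le> \<theta>" and k: "0 < k" and m: "16 \<le> m" and pw: "kab_power_at k (wd \<theta>) p m e"
  shows "real e \<le> \<theta> * real m + 80 * qf m + sqrt (2 * real m) + 5"
proof -
  have m0: "0 < m" using m by simp
  define c1 where "c1 = cntI (wd \<theta>) 1 p (p + m)"
  define c2 where "c2 = cntI (wd \<theta>) 2 p (p + m)"
  have blk1: "\<And>i. i < e \<Longrightarrow> cntI (wd \<theta>) 1 (p + i * m) (p + i * m + m) = c1"
    unfolding c1_def by (rule power_counts[OF k pw])
  have blk2: "\<And>i. i < e \<Longrightarrow> cntI (wd \<theta>) 2 (p + i * m) (p + i * m + m) = c2"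
    unfolding c2_def by (rule power_counts[OF k pw])
  have lt: False if i: "i < e" "i' < e" "ins \<theta> p m i j" "ins \<theta> p m i' j'" "j < j'" for i i' j j'
  proof (cases "j' = Suc j")
    case True
    then show False using adj_clash[OF m i(3) blk1[OF i(1)]] i(4) blk1[OF i(2)] by simp
  next
    case False
    with i(5) have sj: "Suc j < j'" by simp
    have mz: "m \<le> Zs \<theta> j" by (rule ins_m[OF i(3)])
    have z: "2 * m \<le> Zs \<theta> (Suc j)" using Zs_double[of \<theta> j] mz by linarith
    have a: "p < Ss \<theta> (Suc j)" using i(3) m0 unfolding ins_def by linarith
    have "Ss \<theta> (Suc j) \<le> Ss \<theta> j'" using sj by (intro Ss_mono) simp
    then have b0: "Ss \<theta> (Suc j) \<le> p + i' * m" using i(4) unfolding ins_def by linarith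
    have "i' * m \<le> e * m" using i(2) by simp
    then have b: "Ss \<theta> (Suc j) \<le> p + e * m" using b0 by linarith
    obtain i2 where i2: "ins \<theta> p m i2 (Suc j)" "i2 \<le> e"
      using find_ins[OF m0 a b z] by blast
    have "i2 \<noteq> e"
    proof
      assume "i2 = e"
      then have "Ss \<theta> (Suc j) \<le> p + e * m" "p + e * m + m \<le> Ss \<theta> (Suc (Suc j))" using i2 unfolding ins_def by auto
      moreover have "p + e * m \<ge> p + i' * m + m" using lt_mult[OF i(2), of m] by simp
      moreover have "Ss \<theta> (Suc (Suc j)) \<le> Ss \<theta> j'" using sj by (intro Ss_mono) simp
      moreover have "Ss \<theta> j' \<le> p + i' * m" using i(4) unfolding ins_def by simp
      ultimately show False using m0 by linarith
    qed
    then have i2e: "i2 < e" using i2 by simp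
    show False using adj_clash[OF m i(3) blk1[OF i(1)] i2(1) blk1[OF i2e]] .
  qed
  have same: "j = j'" if "i < e" "i' < e" "ins \<theta> p m i j" "ins \<theta> p m i' j'" for i i' j j'
    using lt[OF that] lt[of i' i j' j] that by (metis linorder_neqE_nat)
  define I where "I = {i. i < e \<and> (\<exists>j. ins \<theta> p m i j)}"
  define N where "N = {i. i < e \<and> \<not> (\<exists>j. ins \<theta> p m i j)}"
  have finI: "finite I" and finN: "finite N" unfolding I_def N_def by auto
  have split: "e = card I + card N"
  proof -
    have "{..<e} = I \<union> N" "I \<inter> N = {}" unfolding I_def N_def by auto
    then have "card {..<e} = card I + card N" using card_Un_disjoint[OF finI finN] by simp
    then show ?thesis by simp
  qed
  have cardI: "real (card I) \<le> \<theta> * real m + 80 * qf m + 2"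
  proof (cases "I = {}")
    case True
    then show ?thesis using th qf_nonneg[of m] by simp
  next
    case False
    define imin where "imin = Min I"
    define imax where "imax = Max I"
    have imin: "imin \<in> I" unfolding imin_def using finI False by simp
    have imax: "imax \<in> I" unfolding imax_def using finI False by simp
    have le: "imin \<le> imax" unfolding imin_def imax_def using finI False by simp
    obtain j0 where j0: "ins \<theta> p m imin j0" using imin unfolding I_def by auto
    obtain j1 where j1: "ins \<theta> p m imax j1" using imax unfolding I_def by auto
    have ie: "imin < e" "imax < e" using imin imax unfolding I_def by auto
    have "j1 = j0" using same[OF ie(2) ie(1) j1 j0] .
    then have j0': "ins \<theta> p m imax j0" using j1 by simp
    obtain d where d: "imax = imin + d" using le le_Suc_ex by blast
    define S where "S = Ss \<theta> j0"
    define L where "L = Lseq \<theta> j0"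
    define p1 where "p1 = fst (Pseq \<theta> j0)"
    define p2 where "p2 = snd (Pseq \<theta> j0)"
    define q where "q = p + imin * m - S"
    have Sle: "S \<le> p + imin * m" using j0 unfolding ins_def S_def by simp
    have top: "p + imax * m + m \<le> S + Zs \<theta> j0" using j0' unfolding ins_def S_def Ss_Suc by simp
    have allin: "ins \<theta> p m (imin + i) j0" if "i \<le> d" for i
    proof -
      have "imin * m \<le> (imin + i) * m" by simp
      moreover have "(imin + i) * m \<le> imax * m" using that d by simp
      ultimately show ?thesis using Sle top unfolding ins_def S_def Ss_Suc by linarith
    qed
    have cI: "card I \<le> Suc d"
    proof -
      have "I \<subseteq> {imin..imax}" unfolding imin_def imax_def using finI by auto
      then have "card I \<le> card {imin..imax}" by (intro card_mono) auto
      then show ?thesis using d by simp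
    qed
    have g: "goodp L (j0 mod 2) (Pseq \<theta> j0)" unfolding L_def by (rule Pseq_good)
    have L0: "0 < L" unfolding L_def using Lseq_ge[of j0 \<theta>] by linarith
    have zl: "Zs \<theta> j0 = 2 * L * Ef \<theta> L" unfolding Zs_def Zl_def L_def by simp
    have len: "q + Suc d * m \<le> 2 * L * Ef \<theta> L"
    proof -
      have "q + Suc d * m = p + imax * m + m - S" unfolding q_def d using Sle by (simp add: algebra_simps)
      then show ?thesis using top zl by simp
    qed
    have eqs: "G1 L p1 (q + (i + 1) * m) = G1 L p1 (q + i * m) + c1 \<and> G2 L p2 (q + (i + 1) * m) = G2 L p2 (q + i * m) + c2"
      if i: "i < Suc d" for i
    proof -
      define x where "x = p + (imin + i) * m"
      have ins: "ins \<theta> p m (imin + i) j0" using allin i by simp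
      have ii: "imin + i < e" using i d ie by simp
      have xr: "Ss \<theta> j0 \<le> x" "x \<le> x + m" "x + m \<le> Ss \<theta> (Suc j0)" using ins unfolding ins_def x_def by auto
      have e1: "x - S = q + i * m" unfolding x_def q_def using Sle by (simp add: algebra_simps)
      have e2: "x + m - S = q + (i + 1) * m" unfolding x_def q_def using Sle by (simp add: algebra_simps)
      have b1: "cntI (wd \<theta>) 1 x (x + m) = c1" using blk1[OF ii] unfolding x_def .
      have b2: "cntI (wd \<theta>) 2 x (x + m) = c2" using blk2[OF ii] unfolding x_def .
      show ?thesis using cnt_zone[OF xr] b1 b2 e1 e2 unfolding S_def L_def p1_def p2_def by simp
    qed
    have "real (Suc d) \<le> \<theta> * real m + 80 * qf m + 2"
    proof (rule zone_bound[OF L0 _ _ _ _ Ef_le[OF th] th m0 len])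
      show "p1 < L" "p2 < L" "odd p1" "goodt L p1 p2" using g unfolding goodp_def p1_def p2_def by auto
      show "\<forall>i<Suc d. G1 L p1 (q + (i + 1) * m) = G1 L p1 (q + i * m) + c1" using eqs by blast
      show "\<forall>i<Suc d. G2 L p2 (q + (i + 1) * m) = G2 L p2 (q + i * m) + c2" using eqs by blast
    qed
    then show ?thesis using cI by linarith
  qed
  define J where "J = {j. p < Ss \<theta> j \<and> Ss \<theta> j < p + e * m}"
  have finJ: "finite J"
  proof (rule finite_subset[of _ "{..< p + e * m}"])
    show "J \<subseteq> {..< p + e * m}" unfolding J_def using Ss_ge[of _ \<theta>] by (auto intro: le_less_trans)
  qed simp
  define \<phi> where "\<phi> i = Suc (zone \<theta> (p + i * m))" for i
  have phi: "\<phi> i \<in> J \<and> p + i * m < Ss \<theta> (\<phi> i) \<and> Ss \<theta> (\<phi> i) < p + i * m + m" if i: "i \<in> N" for i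
  proof -
    let ?z = "zone \<theta> (p + i * m)"
    have z: "Ss \<theta> ?z \<le> p + i * m" "p + i * m < Ss \<theta> (Suc ?z)" using zone_prop by auto
    have "\<not> ins \<theta> p m i ?z" using i unfolding N_def by auto
    then have "Ss \<theta> (Suc ?z) < p + i * m + m" using z unfolding ins_def by auto
    moreover have "i * m + m \<le> e * m" using i unfolding N_def by (auto intro: lt_mult)
    ultimately show ?thesis using z unfolding J_def \<phi>_def by auto
  qed
  have inj: "inj_on \<phi> N"
  proof (rule inj_onI)
    fix i i' assume i: "i \<in> N" "i' \<in> N" "\<phi> i = \<phi> i'"
    show "i = i'"
    proof (rule ccontr)
      assume "i \<noteq> i'"
      then consider "i < i'" | "i' < i" by linarith
      then show False
      proof cases
        case 1
        then have "i * m + m \<le> i' * m" using lt_mult by blast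
        moreover have "Ss \<theta> (\<phi> i) < p + i * m + m" "p + i' * m < Ss \<theta> (\<phi> i')" using phi[OF i(1)] phi[OF i(2)] by auto
        moreover have "Ss \<theta> (\<phi> i) = Ss \<theta> (\<phi> i')" using i(3) by simp
        ultimately show False by linarith
      next
        case 2
        then have "i' * m + m \<le> i * m" using lt_mult by blast
        moreover have "Ss \<theta> (\<phi> i') < p + i' * m + m" "p + i * m < Ss \<theta> (\<phi> i)" using phi[OF i(1)] phi[OF i(2)] by auto
        moreover have "Ss \<theta> (\<phi> i) = Ss \<theta> (\<phi> i')" using i(3) by simp
        ultimately show False by linarith
      qed
    qed
  qed
  have cardN: "card N \<le> card J"
  proof -
    have "\<phi> ` N \<subseteq> J" using phi by auto
    then have "card (\<phi> ` N) \<le> card J" using finJ by (intro card_mono) auto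
    then show ?thesis using card_image[OF inj] by simp
  qed
  define J1 where "J1 = {j::nat. j * j < 2 * m}"
  define J2 where "J2 = {j. j \<in> J \<and> Suc j \<notin> J}"
  define J3 where "J3 = {j. j \<in> J \<and> Suc j \<in> J \<and> 2 * m \<le> Zs \<theta> j}"
  have Jsub: "J \<subseteq> J1 \<union> J2 \<union> J3"
  proof
    fix j assume j: "j \<in> J"
    show "j \<in> J1 \<union> J2 \<union> J3"
    proof (cases "Suc j \<in> J \<and> 2 * m \<le> Zs \<theta> j")
      case True then show ?thesis using j unfolding J3_def by auto
    next
      case False
      show ?thesis
      proof (cases "Suc j \<in> J")
        case True
        then have "Zs \<theta> j < 2 * m" using False by auto
        then have "j * j < 2 * m" using Zs_sq[of j \<theta>] by linarith
        then show ?thesis unfolding J1_def by auto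
      next
        case False then show ?thesis using j unfolding J2_def by auto
      qed
    qed
  qed
  have finX: "finite {j::nat. real j < sqrt (2 * real m)}"
    by (rule finite_subset[of _ "{..< nat \<lceil>sqrt (2 * real m)\<rceil>}"]) (auto simp: less_ceiling_iff zless_nat_eq_int_zless)
  have cJ1: "real (card J1) \<le> sqrt (2 * real m) + 1"
  proof -
    have "J1 \<subseteq> {j::nat. real j < sqrt (2 * real m)}"
    proof
      fix j assume "j \<in> J1"
      then have "j * j < 2 * m" unfolding J1_def by simp
      then have "real (j * j) < real (2 * m)" by (simp only: of_nat_less_iff)
      then have "real j * real j < 2 * real m" by simp
      then have "sqrt (real j * real j) < sqrt (2 * real m)" by (rule real_sqrt_less_mono)
      then show "j \<in> {j::nat. real j < sqrt (2 * real m)}" by simp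
    qed
    then have "card J1 \<le> card {j::nat. real j < sqrt (2 * real m)}" using finX by (rule card_mono[rotated])
    then show ?thesis using card_real_less[of "sqrt (2 * real m)"] by simp
  qed
  have finJ1: "finite J1"
  proof (rule finite_subset[of _ "{..<2*m}"])
    show "J1 \<subseteq> {..<2*m}"
    proof
      fix j assume "j \<in> J1"
      then have "j * j < 2 * m" by (simp add: J1_def)
      moreover have "j \<le> j * j" by (rule le_square)
      ultimately have "j < 2 * m" by linarith
      then show "j \<in> {..<2*m}" by simp
    qed
  qed simp
  have cJ2: "card J2 \<le> 1"
  proof (rule card_sub1)
    show "finite J2" using finJ unfolding J2_def by (rule finite_subset[rotated]) auto
  next
    have nlt: False if a: "j \<in> J2" "j' \<in> J2" "j < j'" for j j'
    proof -
      have "Ss \<theta> j < Ss \<theta> (Suc j)" by (rule Ss_strict) simp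
      moreover have "Ss \<theta> (Suc j) \<le> Ss \<theta> j'" using a(3) by (intro Ss_mono) simp
      ultimately have "Suc j \<in> J" using a unfolding J2_def J_def by auto
      then show False using a unfolding J2_def by auto
    qed
    fix x y assume "x \<in> J2" "y \<in> J2"
    then show "x = y" using nlt by (metis linorder_neqE_nat)
  qed
  have J3ins: "\<exists>i. i < e \<and> ins \<theta> p m i j" if j: "j \<in> J3" for j
  proof -
    have a: "p < Ss \<theta> j" "Ss \<theta> j \<le> p + e * m" "2 * m \<le> Zs \<theta> j" "Ss \<theta> (Suc j) < p + e * m"
      using j unfolding J3_def J_def by auto
    obtain i2 where i2: "ins \<theta> p m i2 j" "p + i2 * m + m < Ss \<theta> (Suc j)"
      using find_ins[OF m0 a(1) a(2) a(3)] by blast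
    have "i2 < e"
    proof (rule ccontr)
      assume "\<not> i2 < e"
      then have "e * m \<le> i2 * m" by simp
      then show False using i2(2) a(4) by linarith
    qed
    then show ?thesis using i2 by blast
  qed
  have cJ3: "card J3 \<le> 1"
  proof (rule card_sub1)
    show "finite J3" using finJ unfolding J3_def by (rule finite_subset[rotated]) auto
  next
    fix x y assume "x \<in> J3" "y \<in> J3"
    then obtain i i' where "i < e" "ins \<theta> p m i x" "i' < e" "ins \<theta> p m i' y" using J3ins by blast
    then show "x = y" using same by blast
  qed
  have "card J \<le> card (J1 \<union> J2 \<union> J3)"
    using Jsub finJ1 finJ by (intro card_mono) (auto simp: J2_def J3_def intro: finite_subset)
  also have "\<dots> \<le> card J1 + card J2 + card J3"
    by (meson card_Un_le add_le_mono1 order_trans)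
  finally have cJ: "real (card J) \<le> sqrt (2 * real m) + 3" using cJ1 cJ2 cJ3 by linarith
  show ?thesis using split cardI cardN cJ by linarith
qed

lemma lower_power:
  assumes th: "0 \<le> \<theta>"
  shows "kab_power_at k (wd \<theta>) (Ss \<theta> j) (2 * Lseq \<theta> j) (Ef \<theta> (Lseq \<theta> j))"
proof -
  let ?L = "Lseq \<theta> j" and ?E = "Ef \<theta> (Lseq \<theta> j)" and ?S = "Ss \<theta> j"
  let ?p1 = "fst (Pseq \<theta> j)" and ?p2 = "snd (Pseq \<theta> j)"
  have L0: "0 < ?L" using Lseq_ge[of j \<theta>] by linarith
  have E0: "0 < ?E" using Ef_ge1[of \<theta> ?L] by simp
  have top: "Ss \<theta> (Suc j) = ?S + ?E * (2 * ?L)" unfolding Ss_Suc Zs_def Zl_def by simp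
  have feq: "factor (wd \<theta>) (?S + i * (2 * ?L)) (2 * ?L) = factor (wd \<theta>) (?S + (i + 1) * (2 * ?L)) (2 * ?L)"
    if i: "i + 1 < ?E" for i
  proof (rule nth_equalityI)
    show "length (factor (wd \<theta>) (?S + i * (2 * ?L)) (2 * ?L)) = length (factor (wd \<theta>) (?S + (i + 1) * (2 * ?L)) (2 * ?L))"
      by (simp add: factor_def)
  next
    fix r assume "r < length (factor (wd \<theta>) (?S + i * (2 * ?L)) (2 * ?L))"
    then have r: "r < 2 * ?L" by (simp add: factor_def)
    have "(i + 2) * (2 * ?L) \<le> ?E * (2 * ?L)" using i by (intro mult_le_mono1) simp
    then have b: "?S + (i + 1) * (2 * ?L) + r < Ss \<theta> (Suc j)" using r top by (simp add: algebra_simps)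
    have b2: "?S + i * (2 * ?L) + r < Ss \<theta> (Suc j)" using b by (simp add: algebra_simps)
    have w1: "wd \<theta> (?S + i * (2 * ?L) + r) = Vw ?L ?p1 ?p2 (i * (2 * ?L) + r)"
      using wd_in_zone[of \<theta> j "?S + i * (2 * ?L) + r"] b2 by simp
    have w2: "wd \<theta> (?S + (i + 1) * (2 * ?L) + r) = Vw ?L ?p1 ?p2 ((i * (2 * ?L) + r) + 2 * ?L)"
      using wd_in_zone[of \<theta> j "?S + (i + 1) * (2 * ?L) + r"] b by (simp add: algebra_simps)
    show "factor (wd \<theta>) (?S + i * (2 * ?L)) (2 * ?L) ! r = factor (wd \<theta>) (?S + (i + 1) * (2 * ?L)) (2 * ?L) ! r"
      using r w1 w2 Vw_period[OF L0] by (simp add: factor_def)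
  qed
  show ?thesis unfolding kab_power_at_def
  proof (intro conjI allI impI)
    show "0 < 2 * ?L" using L0 by simp
    show "0 < ?E" by (rule E0)
    fix i assume "i + 1 < ?E"
    then show "kab_equiv k (factor (wd \<theta>) (?S + i * (2 * ?L)) (2 * ?L)) (factor (wd \<theta>) (?S + (i + 1) * (2 * ?L)) (2 * ?L))"
      using feq unfolding kab_equiv_def by simp
  qed
qed

lemma ratio_lower:
  assumes th: "0 \<le> \<theta>"
  shows "ereal \<theta> \<le> kab_A k (wd \<theta>) (2 * Lseq \<theta> j) / ereal (real (2 * Lseq \<theta> j))"
proof -
  let ?L = "Lseq \<theta> j" and ?E = "Ef \<theta> (Lseq \<theta> j)"
  have L0: "0 < ?L" using Lseq_ge[of j \<theta>] by linarith
  have "ereal (real ?E) \<le> kab_A k (wd \<theta>) (2 * ?L)"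
    unfolding kab_A_def by (rule Sup_upper) (use lower_power[OF th] in blast)
  then have "ereal (real ?E) / ereal (real (2 * ?L)) \<le> kab_A k (wd \<theta>) (2 * ?L) / ereal (real (2 * ?L))"
    using L0 by (intro ereal_divide_right_mono) auto
  moreover have "ereal (real ?E) / ereal (real (2 * ?L)) = ereal (real ?E / real (2 * ?L))" using L0 by simp
  moreover have "\<theta> \<le> real ?E / real (2 * ?L)"
    using Ef_ge[of \<theta> ?L] L0 by (simp add: field_simps)
  ultimately show ?thesis by (metis ereal_less_eq(3) order_trans)
qed

lemma ratio_upper:
  assumes th: "0 \<le> \<theta>" and k: "0 < k" and m: "16 \<le> m"
  shows "kab_A k (wd \<theta>) m / ereal (real m) \<le> ereal ((\<theta> * real m + 80 * qf m + sqrt (2 * real m) + 5) / real m)"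
proof -
  let ?B = "\<theta> * real m + 80 * qf m + sqrt (2 * real m) + 5"
  have "kab_A k (wd \<theta>) m \<le> ereal ?B"
    unfolding kab_A_def by (rule Sup_least) (use upper_bound[OF th k m] in auto)
  then have "kab_A k (wd \<theta>) m / ereal (real m) \<le> ereal ?B / ereal (real m)"
    using m by (intro ereal_divide_right_mono) auto
  also have "\<dots> = ereal (?B / real m)" using m by simp
  finally show ?thesis .
qed

theorem theorem2:
  fixes k :: nat and \<theta> :: real
  assumes "0 < k" and "0 \<le> \<theta>"
  shows "\<exists>w :: nat \<Rightarrow> nat. range w \<subseteq> {0, 1, 2} \<and> kab_crit_exp k w = ereal \<theta>"
proof (intro exI conjI)
  show "range (wd \<theta>) \<subseteq> {0, 1, 2}" by (rule image_subsetI) (rule wd_range)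
  define X where "X m = kab_A k (wd \<theta>) m / ereal (real m)" for m
  define B where "B m = (\<theta> * real m + 80 * qf m + sqrt (2 * real m) + 5) / real m" for m
  have lim: "B \<longlonglongrightarrow> \<theta>" unfolding B_def qf_def by real_asymp
  have up: "limsup X \<le> ereal \<theta>"
  proof -
    have "limsup X \<le> limsup (\<lambda>m. ereal (B m))"
    proof (rule Limsup_mono)
      show "eventually (\<lambda>m. X m \<le> ereal (B m)) sequentially"
        unfolding X_def B_def using eventually_ge_at_top[of 16]
        by eventually_elim (rule ratio_upper[OF assms(2) assms(1)])
    qed
    also have "limsup (\<lambda>m. ereal (B m)) = ereal \<theta>"
      by (rule lim_imp_Limsup) (simp_all add: lim)
    finally show ?thesis .
  qed
  have low: "ereal \<theta> \<le> limsup X"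
    unfolding limsup_INF_SUP
  proof (rule INF_greatest)
    fix n :: nat
    have "n \<le> 2 * Lseq \<theta> n" using Lseq_ge[of n \<theta>] by (metis le_add2 le_square order_trans mult_2 trans_le_add2)
    then have "X (2 * Lseq \<theta> n) \<le> (SUP m\<in>{n..}. X m)" by (intro SUP_upper) auto
    moreover have "ereal \<theta> \<le> X (2 * Lseq \<theta> n)" unfolding X_def by (rule ratio_lower[OF assms(2)])
    ultimately show "ereal \<theta> \<le> (SUP m\<in>{n..}. X m)" by (rule order_trans[rotated])
  qed
  show "kab_crit_exp k (wd \<theta>) = ereal \<theta>"
    unfolding kab_crit_exp_def X_def[symmetric] using up low by (rule antisym)
qed


end
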